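(* Let $0<p<1/2$, $\delta_1=2\rho(1-\rho)$ and $R_1=\bar R(\delta_1)$. Then \[ -A(\delta_1)-R_1+1-h(\delta_1)=E_0(R_1,p). \]
   Context: Logarithms base 2, $h$ binary entropy, $D(x\|y)=x\log\frac xy+(1-x)\log\frac{1-x}{1-y}$. $\rho=\frac{\sqrt p}{\sqrt p+\sqrt{1-p}}$, $R_{\mathrm{crit}}=1-h(\rho)$, $A(\omega)=\omega\log\big(2\sqrt{p(1-p)}\big)$, and $E_0(R,p)=D(\rho\|p)+R_{\mathrm{crit}}-R$. Further $\tau_\nu(\xi)=\frac12\Big(1-\sqrt{1-4\big(\sqrt{\nu(1-\nu)-\xi(1-\xi)}-\xi\big)^2}\Big)$ and $\bar R(\delta)=1+\min_{\frac12(1-\sqrt{1-2\delta})\le\alpha\le\frac12}\big(h(\tau_\alpha(\delta/2))-h(\alpha)\big)$ (the inverse of the linear programming bound on relative distance). *)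

theory Defs
  imports "HOL-Analysis.Analysis"
begin

text \<open>All logarithms are base 2. Convention 0 log 0 = 0 holds automatically since log 2 0 = 0.\<close>

definition bin_entropy :: "real \<Rightarrow> real" where
  "bin_entropy x = - x * log 2 x - (1 - x) * log 2 (1 - x)"

definition kl_div :: "real \<Rightarrow> real \<Rightarrow> real" where
  "kl_div x y = x * log 2 (x / y) + (1 - x) * log 2 ((1 - x) / (1 - y))"

definition rho :: "real \<Rightarrow> real" where
  "rho p = sqrt p / (sqrt p + sqrt (1 - p))"

definition R_crit :: "real \<Rightarrow> real" where
  "R_crit p = 1 - bin_entropy (rho p)"

definition A_fun :: "real \<Rightarrow> real \<Rightarrow> real" where
  "A_fun p \<omega> = \<omega> * log 2 (2 * sqrt (p * (1 - p)))"

definition E0 :: "real \<Rightarrow> real \<Rightarrow> real" where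
  "E0 R p = kl_div (rho p) p + R_crit p - R"

definition tau :: "real \<Rightarrow> real \<Rightarrow> real" where
  "tau \<nu> \<xi> = (1 - sqrt (1 - 4 * (sqrt (\<nu> * (1 - \<nu>) - \<xi> * (1 - \<xi>)) - \<xi>)^2)) / 2"

text \<open>Inverse of the linear programming bound; the minimum over the compact interval
  is rendered as the infimum (it is attained by continuity).\<close>
definition R_bar :: "real \<Rightarrow> real" where
  "R_bar \<delta> = 1 + (INF \<alpha>\<in>{(1 - sqrt (1 - 2 * \<delta>)) / 2 .. 1/2}.
                      bin_entropy (tau \<alpha> (\<delta> / 2)) - bin_entropy \<alpha>)"

end

theory Submission
  imports Defs
begin

theorem lemma16:
  fixes p :: real
  assumes "0 < p" and "p < 1/2"
  defines "\<delta>1 \<equiv> 2 * rho p * (1 - rho p)"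
  defines "R1 \<equiv> R_bar \<delta>1"
  shows "- A_fun p \<delta>1 - R1 + 1 - bin_entropy \<delta>1 = E0 R1 p"
proof -
  define a where "a = sqrt p"
  define b where "b = sqrt (1 - p)"
  define s where "s = a + b"
  have a0: "a > 0" using assms a_def by simp
  have b0: "b > 0" using assms b_def by simp
  have s0: "s > 0" using a0 b0 s_def by simp
  have pa: "p = a^2" using assms a_def by simp
  have qb: "1 - p = b^2" using assms b_def by simp
  have ab1: "a^2 + b^2 = 1" using pa qb by simp
  have ss: "s^2 = 1 + 2*a*b" using ab1 s_def by (simp add: power2_eq_square algebra_simps)
  have rho: "rho p = a / s" using rho_def a_def b_def s_def by simp
  have rho1: "1 - rho p = b / s" using rho s0 s_def by (simp add: field_simps)
  have d1: "\<delta>1 = 2*a*b / s^2" using rho rho1 \<delta>1_def by (simp add: power2_eq_square)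
  have d2: "1 - \<delta>1 = 1 / s^2"
  proof -
    have "s^2 > 0" using s0 by simp
    then show ?thesis using d1 ss by (simp add: field_simps)
  qed
  have sq: "sqrt (p * (1 - p)) = a * b" using a_def b_def real_sqrt_mult by simp
  have L1: "log 2 (rho p) = log 2 a - log 2 s" using a0 s0 rho by (simp add: log_divide)
  have L2: "log 2 (1 - rho p) = log 2 b - log 2 s" using b0 s0 rho1 by (simp add: log_divide)
  have L3: "log 2 (rho p / p) = - log 2 a - log 2 s"
  proof -
    have "rho p / p = 1 / (a * s)" using rho pa a0 s0 by (simp add: power2_eq_square)
    then show ?thesis using a0 s0 by (simp add: log_divide log_mult)
  qed
  have L4: "log 2 ((1 - rho p) / (1 - p)) = - log 2 b - log 2 s"
  proof -
    have "(1 - rho p) / (1 - p) = 1 / (b * s)" using rho1 qb b0 s0 by (simp add: power2_eq_square)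
    then show ?thesis using b0 s0 by (simp add: log_divide log_mult)
  qed
  have L5: "log 2 (2 * sqrt (p * (1 - p))) = 1 + log 2 a + log 2 b" using a0 b0 sq by (simp add: log_mult)
  have L6: "log 2 \<delta>1 = 1 + log 2 a + log 2 b - 2 * log 2 s" using d1 a0 b0 s0
    by (simp add: log_divide log_mult log_nat_power)
  have L7: "log 2 (1 - \<delta>1) = - 2 * log 2 s" using d2 s0 by (simp add: log_divide log_nat_power)
  show ?thesis
    unfolding A_fun_def E0_def kl_div_def R_crit_def bin_entropy_def L1 L2 L3 L4 L5 L6 L7
    by (simp add: algebra_simps)
qed

end
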